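(* Let $G$ be a strongly chordal finite simple graph with at least one edge. Then $G$ has a simplicial edge $e$ such that $G\setminus e$ is strongly chordal. Moreover, $e$ can be chosen so that, in addition, if $G$ is claw-free then $G\setminus e$ is claw-free.
   Context: A graph is chordal if it has no induced cycle of length at least $4$. A perfect elimination order of $G$ is an ordering $v_1,\dots,v_n$ of the vertices such that whenever $v_iv_j,v_iv_k\in E(G)$ with $i<j,k$, then $v_jv_k\in E(G)$. A strong elimination order is a perfect elimination order such that whenever $v_iv_k, v_kv_j, v_iv_\ell\in E(G)$ with $i<k<\ell$ and $i<j$, then $v_jv_\ell\in E(G)$. $G$ is strongly chordal if it has a strong elimination order. A clique is a set of vertices inducing a complete graph. For a chordal graph $G$, a simplicial edge is an edge $e$ contained in exactly one maximal clique of $G$ and such that $G\setminus e$ (delete the edge, keep all vertices) is chordal. The claw is $K_{1,3}$; claw-free means no induced claw. *)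

theory Defs
  imports Main
begin

definition sgraph :: "'a set \<Rightarrow> 'a set set \<Rightarrow> bool" where
  "sgraph V E \<longleftrightarrow> finite V \<and> (\<forall>e\<in>E. \<exists>u v. u \<noteq> v \<and> u \<in> V \<and> v \<in> V \<and> e = {u, v})"

definition adj :: "'a set set \<Rightarrow> 'a \<Rightarrow> 'a \<Rightarrow> bool" where
  "adj E u v \<longleftrightarrow> {u, v} \<in> E"

definition induced_cycle :: "'a set \<Rightarrow> 'a set set \<Rightarrow> 'a list \<Rightarrow> bool" where
  "induced_cycle V E cs \<longleftrightarrow> length cs \<ge> 3 \<and> distinct cs \<and> set cs \<subseteq> V \<and>
     (\<forall>i < length cs. \<forall>j < length cs.
        adj E (cs ! i) (cs ! j) \<longleftrightarrow>
          (j = Suc i mod length cs \<or> i = Suc j mod length cs))"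

definition chordal :: "'a set \<Rightarrow> 'a set set \<Rightarrow> bool" where
  "chordal V E \<longleftrightarrow> \<not> (\<exists>cs. induced_cycle V E cs \<and> length cs \<ge> 4)"

definition vertex_order :: "'a set \<Rightarrow> 'a list \<Rightarrow> bool" where
  "vertex_order V vs \<longleftrightarrow> distinct vs \<and> set vs = V"

definition perfect_elim_order :: "'a set \<Rightarrow> 'a set set \<Rightarrow> 'a list \<Rightarrow> bool" where
  "perfect_elim_order V E vs \<longleftrightarrow> vertex_order V vs \<and>
     (\<forall>i j k. i < length vs \<and> j < length vs \<and> k < length vs \<and> i < j \<and> i < k \<and>
        adj E (vs ! i) (vs ! j) \<and> adj E (vs ! i) (vs ! k) \<and> j \<noteq> k \<longrightarrow>
        adj E (vs ! j) (vs ! k))"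

definition strong_elim_order :: "'a set \<Rightarrow> 'a set set \<Rightarrow> 'a list \<Rightarrow> bool" where
  "strong_elim_order V E vs \<longleftrightarrow> perfect_elim_order V E vs \<and>
     (\<forall>i j k l. i < length vs \<and> j < length vs \<and> k < length vs \<and> l < length vs \<and>
        i < k \<and> k < l \<and> i < j \<and>
        adj E (vs ! i) (vs ! k) \<and> adj E (vs ! k) (vs ! j) \<and> adj E (vs ! i) (vs ! l) \<and> j \<noteq> l \<longrightarrow>
        adj E (vs ! j) (vs ! l))"

definition strongly_chordal :: "'a set \<Rightarrow> 'a set set \<Rightarrow> bool" where
  "strongly_chordal V E \<longleftrightarrow> (\<exists>vs. strong_elim_order V E vs)"

definition clique :: "'a set \<Rightarrow> 'a set set \<Rightarrow> 'a set \<Rightarrow> bool" where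
  "clique V E K \<longleftrightarrow> K \<subseteq> V \<and> (\<forall>u\<in>K. \<forall>v\<in>K. u \<noteq> v \<longrightarrow> adj E u v)"

definition maximal_clique :: "'a set \<Rightarrow> 'a set set \<Rightarrow> 'a set \<Rightarrow> bool" where
  "maximal_clique V E K \<longleftrightarrow> clique V E K \<and> (\<forall>K'. clique V E K' \<and> K \<subseteq> K' \<longrightarrow> K' = K)"

definition simplicial_edge :: "'a set \<Rightarrow> 'a set set \<Rightarrow> 'a set \<Rightarrow> bool" where
  "simplicial_edge V E e \<longleftrightarrow> e \<in> E \<and> (\<exists>!K. maximal_clique V E K \<and> e \<subseteq> K) \<and>
     chordal V (E - {e})"

definition claw_free :: "'a set \<Rightarrow> 'a set set \<Rightarrow> bool" where
  "claw_free V E \<longleftrightarrow> \<not> (\<exists>c x y z. c \<in> V \<and> x \<in> V \<and> y \<in> V \<and> z \<in> V \<and>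
      distinct [c, x, y, z] \<and> adj E c x \<and> adj E c y \<and> adj E c z \<and>
      \<not> adj E x y \<and> \<not> adj E x z \<and> \<not> adj E y z)"

end

theory Submission
  imports Defs
begin

lemma adj_sym: "adj E u v = adj E v u"
  unfolding adj_def by (simp add: insert_commute)

lemma adj_irrefl: "sgraph V E \<Longrightarrow> \<not> adj E u u"
  unfolding adj_def sgraph_def by (metis doubleton_eq_iff insert_absorb2)

lemma adj_in_V: "sgraph V E \<Longrightarrow> adj E u v \<Longrightarrow> u \<in> V \<and> v \<in> V"
  unfolding adj_def sgraph_def by (metis doubleton_eq_iff)

lemma Suc_mod_lt: "(x::nat) < m \<Longrightarrow> Suc x mod m = (if Suc x = m then 0 else Suc x)"
  by (simp add: mod_Suc)

lemma peo_chordal: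
  assumes peo: "perfect_elim_order V E vs"
  shows "chordal V E"
  unfolding chordal_def
proof
  assume "\<exists>cs. induced_cycle V E cs \<and> 4 \<le> length cs"
  then obtain cs where ic: "induced_cycle V E cs" and m4: "4 \<le> length cs" by blast
  define m where "m = length cs"
  define n where "n = length vs"
  have vo: "distinct vs" "set vs = V" using peo unfolding perfect_elim_order_def vertex_order_def by auto
  have dcs: "distinct cs" and scs: "set cs \<subseteq> V" using ic unfolding induced_cycle_def by auto
  have adjc: "\<And>a b. a < m \<Longrightarrow> b < m \<Longrightarrow> adj E (cs!a) (cs!b) \<longleftrightarrow> (b = Suc a mod m \<or> a = Suc b mod m)"
    using ic unfolding induced_cycle_def m_def by blast
  have "\<forall>x\<in>set cs. \<exists>a. a < n \<and> vs!a = x" using scs vo unfolding n_def by (metis in_set_conv_nth subsetD)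
  then obtain f where f: "\<And>x. x \<in> set cs \<Longrightarrow> f x < n \<and> vs!(f x) = x" by metis
  obtain p where p: "p < m" and pmin: "\<And>q. q < m \<Longrightarrow> f (cs!p) \<le> f (cs!q)"
    proof -
    have "cs \<noteq> []" using m4 by auto
    then show ?thesis using ex_has_least_nat[of "\<lambda>p. p < m" 0 "\<lambda>p. f (cs!p)"] that unfolding m_def by auto
  qed
  define q1 where "q1 = Suc p mod m"
  define q0 where "q0 = (if p = 0 then m - 1 else p - 1)"
  have m4': "4 \<le> m" using m4 m_def by simp
  have q1e: "q1 = (if Suc p = m then 0 else Suc p)" using Suc_mod_lt[OF p] q1_def by simp
  have q0m: "q0 < m" "q1 < m" using q1e q0_def p m4' by auto
  have pq0: "p = Suc q0 mod m" using Suc_mod_lt[OF q0m(1)] q0_def p m4' by auto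
  have ne: "q0 \<noteq> p" "q1 \<noteq> p" "q0 \<noteq> q1" using q0_def q1e p m4' by auto
  have nq: "q1 \<noteq> Suc q0 mod m" using pq0 ne by simp
  have nq2: "q0 \<noteq> Suc q1 mod m" using Suc_mod_lt[OF q0m(2)] q0_def q1e p m4' by auto
  have a1: "adj E (cs!p) (cs!q1)" using adjc[OF p q0m(2)] q1_def by simp
  have a0: "adj E (cs!p) (cs!q0)" using adjc[OF p q0m(1)] pq0 by simp
  have inset: "\<And>q. q < m \<Longrightarrow> cs!q \<in> set cs" using m_def by simp
  have dneq: "\<And>a b. a < m \<Longrightarrow> b < m \<Longrightarrow> a \<noteq> b \<Longrightarrow> cs!a \<noteq> cs!b"
    using dcs m_def nth_eq_iff_index_eq by metis
  have lt: "\<And>q. q < m \<Longrightarrow> q \<noteq> p \<Longrightarrow> f (cs!p) < f (cs!q)"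
  proof -
    fix q assume q: "q < m" "q \<noteq> p"
    have "f (cs!p) \<noteq> f (cs!q)"
    proof
      assume "f (cs!p) = f (cs!q)"
      then have "cs!p = cs!q" using f[OF inset[OF p]] f[OF inset[OF q(1)]] by metis
      then show False using dneq[OF p q(1)] q by metis
    qed
    then show "f (cs!p) < f (cs!q)" using pmin[OF q(1)] by simp
  qed
  have fq: "f (cs!q0) \<noteq> f (cs!q1)"
    using f[OF inset[OF q0m(1)]] f[OF inset[OF q0m(2)]] dneq[OF q0m ne(3)] by metis
  have "adj E (vs!(f (cs!q1))) (vs!(f (cs!q0)))"
    using peo unfolding perfect_elim_order_def n_def[symmetric]
    apply (elim conjE)
    apply (erule allE[of _ "f (cs!p)"], erule allE[of _ "f (cs!q1)"], erule allE[of _ "f (cs!q0)"])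
    using f[OF inset[OF p]] f[OF inset[OF q0m(1)]] f[OF inset[OF q0m(2)]] lt[OF q0m(1) ne(1)] lt[OF q0m(2) ne(2)] a0 a1 fq
    by auto
  then have "adj E (cs!q1) (cs!q0)" using f[OF inset[OF q0m(1)]] f[OF inset[OF q0m(2)]] by simp
  then show False using adjc[OF q0m(2) q0m(1)] nq nq2 by auto
qed

theorem lemma2p5:
  fixes V :: "'a set" and E :: "'a set set"
  assumes "sgraph V E" and "strongly_chordal V E" and "E \<noteq> {}"
  shows "\<exists>e. simplicial_edge V E e \<and> strongly_chordal V (E - {e}) \<and>
             (claw_free V E \<longrightarrow> claw_free V (E - {e}))"
proof -
  note sg = assms(1)
  obtain vs where seo: "strong_elim_order V E vs" using assms(2) unfolding strongly_chordal_def by blast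
  define n where "n = length vs"
  define P where "P a b = adj E (vs!a) (vs!b)" for a b
  have vo: "distinct vs" "set vs = V" using seo unfolding strong_elim_order_def perfect_elim_order_def vertex_order_def by auto
  have pe: "\<And>a b c. a < n \<Longrightarrow> b < n \<Longrightarrow> c < n \<Longrightarrow> a < b \<Longrightarrow> a < c \<Longrightarrow> P a b \<Longrightarrow> P a c \<Longrightarrow> b \<noteq> c \<Longrightarrow> P b c"
    using seo unfolding strong_elim_order_def perfect_elim_order_def P_def n_def by blast
  have se: "\<And>i j k l. i < n \<Longrightarrow> j < n \<Longrightarrow> k < n \<Longrightarrow> l < n \<Longrightarrow> i < k \<Longrightarrow> k < l \<Longrightarrow> i < j \<Longrightarrow>
        P i k \<Longrightarrow> P k j \<Longrightarrow> P i l \<Longrightarrow> j \<noteq> l \<Longrightarrow> P j l"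
    using seo unfolding strong_elim_order_def P_def n_def by blast
  have Psym: "\<And>a b. P a b = P b a" unfolding P_def using adj_sym by metis
  have Pirr: "\<And>a. \<not> P a a" unfolding P_def using adj_irrefl[OF sg] by metis
  have idx: "\<And>x. x \<in> V \<Longrightarrow> \<exists>a<n. vs!a = x" using vo unfolding n_def by (metis in_set_conv_nth)
  have inV: "\<And>a. a < n \<Longrightarrow> vs!a \<in> V" using vo unfolding n_def by auto
  have inj: "\<And>a b. a < n \<Longrightarrow> b < n \<Longrightarrow> vs!a = vs!b \<longleftrightarrow> a = b" using vo unfolding n_def by (simp add: nth_eq_iff_index_eq)
  obtain e0 where e0: "e0 \<in> E" using assms(3) by blast
  have "\<forall>e\<in>E. \<exists>u v. u \<noteq> v \<and> u \<in> V \<and> v \<in> V \<and> e = {u, v}" using sg unfolding sgraph_def by simp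
  then have "\<exists>u v. u \<noteq> v \<and> u \<in> V \<and> v \<in> V \<and> e0 = {u, v}" using e0 by (rule bspec)
  then obtain u v where uv: "u \<in> V" "v \<in> V" "e0 = {u,v}" by blast
  then have "u \<in> V" "v \<in> V" "{u,v} \<in> E" using e0 by auto
  then obtain a b where ab: "a < n" "b < n" "P a b"
  proof -
    assume th: "\<And>a b. a < n \<Longrightarrow> b < n \<Longrightarrow> P a b \<Longrightarrow> thesis"
    obtain a where a: "a < n" "vs!a = u" using idx \<open>u \<in> V\<close> by blast
    obtain b where b: "b < n" "vs!b = v" using idx \<open>v \<in> V\<close> by blast
    show thesis using th[OF a(1) b(1)] a b \<open>{u,v} \<in> E\<close> unfolding P_def adj_def by simp
  qed
  define i where "i = (LEAST a. a < n \<and> (\<exists>b<n. P a b))"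
  have iP: "i < n \<and> (\<exists>b<n. P i b)" unfolding i_def by (rule LeastI[of _ a]) (use ab in blast)
  have iso: "\<And>a b. a < i \<Longrightarrow> b < n \<Longrightarrow> \<not> P a b"
  proof
    fix a b assume h: "a < i" "b < n" "P a b"
    have "a < n" using h(1) iP by simp
    then have "i \<le> a" unfolding i_def using h by (intro Least_le) blast
    then show False using \<open>a < i\<close> by simp
  qed
  have iso2: "\<And>a b. a < i \<Longrightarrow> b < n \<Longrightarrow> \<not> P b a" using iso Psym by simp
  define S where "S = {b. b < n \<and> P i b}"
  define l where "l = Max S"
  have finS: "finite S" unfolding S_def by simp
  have Sne: "S \<noteq> {}" using iP unfolding S_def by blast
  have lS: "l < n" "P i l" using Max_in[OF finS Sne] unfolding l_def S_def by auto
  have lmax: "\<And>b. b < n \<Longrightarrow> P i b \<Longrightarrow> b \<le> l" using Max_ge[OF finS] unfolding l_def S_def by auto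
  have after: "\<And>b. b < n \<Longrightarrow> P i b \<Longrightarrow> i < b"
  proof -
    fix b assume b: "b < n" "P i b"
    have "b \<noteq> i" using b Pirr by metis
    moreover have "\<not> b < i" using iso2 b iP by blast
    ultimately show "i < b" by simp
  qed
  have key: "\<And>c z. c < n \<Longrightarrow> z < n \<Longrightarrow> P i c \<Longrightarrow> P c z \<Longrightarrow> z \<noteq> l \<Longrightarrow> P z l"
  proof -
    fix c z assume h: "c < n" "z < n" "P i c" "P c z" "z \<noteq> l"
    show "P z l"
    proof (cases "c = l")
      case True then show ?thesis using h Psym by metis
    next
      case False
      then have cl: "c < l" using lmax h by force
      show ?thesis
      proof (cases "z = i")
        case True then show ?thesis using lS Psym by metis
      next
        case False
        have "\<not> z < i" using iso2 h by blast
        then have "i < z" using False by simp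
        then show ?thesis using se[of i z c l] h lS cl after iP by blast
      qed
    qed
  qed
  define x0 where "x0 = vs!i"
  define y0 where "y0 = vs!l"
  define e where "e = {x0, y0}"
  have P'eq: "\<And>a b. a < n \<Longrightarrow> b < n \<Longrightarrow> adj (E - {e}) (vs!a) (vs!b) \<longleftrightarrow> P a b \<and> \<not> ((a = i \<and> b = l) \<or> (a = l \<and> b = i))"
    unfolding adj_def P_def e_def x0_def y0_def using inj iP lS by (auto simp: doubleton_eq_iff)
  have peo': "perfect_elim_order V (E - {e}) vs"
    unfolding perfect_elim_order_def vertex_order_def
  proof (intro conjI allI impI)
    show "distinct vs" "set vs = V" using vo by auto
    fix a b c assume h: "a < length vs \<and> b < length vs \<and> c < length vs \<and> a < b \<and> a < c \<and>
        adj (E - {e}) (vs ! a) (vs ! b) \<and> adj (E - {e}) (vs ! a) (vs ! c) \<and> b \<noteq> c"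
    then have "P b c" using pe P'eq unfolding n_def by blast
    moreover have "b \<noteq> i" "c \<noteq> i" using h P'eq iso unfolding n_def by auto
    ultimately show "adj (E - {e}) (vs ! b) (vs ! c)" using P'eq h unfolding n_def by auto
  qed
  have seo': "strong_elim_order V (E - {e}) vs"
    unfolding strong_elim_order_def
  proof (intro conjI allI impI)
    show "perfect_elim_order V (E - {e}) vs" by (rule peo')
    fix a j k m assume h: "a < length vs \<and> j < length vs \<and> k < length vs \<and> m < length vs \<and>
        a < k \<and> k < m \<and> a < j \<and>
        adj (E - {e}) (vs ! a) (vs ! k) \<and> adj (E - {e}) (vs ! k) (vs ! j) \<and> adj (E - {e}) (vs ! a) (vs ! m) \<and> j \<noteq> m"
    then have "P j m" using se[of a j k m] P'eq unfolding n_def by blast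
    moreover have "j \<noteq> i" "m \<noteq> i" using h P'eq iso unfolding n_def by auto
    ultimately show "adj (E - {e}) (vs ! j) (vs ! m)" using P'eq h unfolding n_def by auto
  qed
  have adjE': "\<And>p q. adj (E - {e}) p q \<longleftrightarrow> adj E p q \<and> {p, q} \<noteq> e" unfolding adj_def by auto
  have keyv: "\<And>c z. adj E x0 c \<Longrightarrow> adj E c z \<Longrightarrow> z \<noteq> y0 \<Longrightarrow> adj E z y0"
  proof -
    fix c z assume h: "adj E x0 c" "adj E c z" "z \<noteq> y0"
    obtain ci where ci: "ci < n" "vs!ci = c" using idx adj_in_V[OF sg h(1)] by blast
    obtain zi where zi: "zi < n" "vs!zi = z" using idx adj_in_V[OF sg h(2)] by blast
    have "P zi l" using key[of ci zi] h ci zi unfolding P_def x0_def y0_def by blast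
    then show "adj E z y0" unfolding P_def y0_def using zi by simp
  qed
  have nbcl: "\<And>u w. adj E x0 u \<Longrightarrow> adj E x0 w \<Longrightarrow> u \<noteq> w \<Longrightarrow> adj E u w"
  proof -
    fix u w assume h: "adj E x0 u" "adj E x0 w" "u \<noteq> w"
    obtain ui where ui: "ui < n" "vs!ui = u" using idx adj_in_V[OF sg h(1)] by blast
    obtain wi where wi: "wi < n" "vs!wi = w" using idx adj_in_V[OF sg h(2)] by blast
    have "P ui wi" using pe[of i ui wi] after h ui wi iP unfolding P_def x0_def by blast
    then show "adj E u w" using ui wi unfolding P_def by simp
  qed
  have x0y0: "adj E x0 y0" using lS(2) unfolding P_def x0_def y0_def .
  have x0V: "x0 \<in> V" using adj_in_V[OF sg x0y0] by simp
  define K0 where "K0 = insert x0 {u. adj E x0 u}"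
  have K0cl: "clique V E K0" unfolding clique_def
  proof (intro conjI ballI impI)
    show "K0 \<subseteq> V" using x0V adj_in_V[OF sg] unfolding K0_def by blast
    fix u w assume h: "u \<in> K0" "w \<in> K0" "u \<noteq> w"
    show "adj E u w"
    proof (cases "u = x0")
      case True then show ?thesis using h unfolding K0_def by auto
    next
      case False
      note F = this
      show ?thesis
      proof (cases "w = x0")
        case True then show ?thesis using h F adj_sym unfolding K0_def by fastforce
      next
        case False then show ?thesis using h F nbcl unfolding K0_def by auto
      qed
    qed
  qed
  have Ksub: "K \<subseteq> K0" if h0: "clique V E K" "x0 \<in> K" for K
  proof
    fix u assume hu: "u \<in> K"
    note h = h0 hu
    show "u \<in> K0"
    proof (cases "u = x0")
      case True then show ?thesis unfolding K0_def by simp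
    next
      case False
      have "\<forall>a\<in>K. \<forall>b\<in>K. a \<noteq> b \<longrightarrow> adj E a b" using h(1) unfolding clique_def by simp
      then have "adj E x0 u" using h(2,3) False by simp
      then show ?thesis unfolding K0_def by simp
    qed
  qed
  have eK0: "e \<subseteq> K0" unfolding e_def K0_def using x0y0 by simp
  have mK0: "maximal_clique V E K0" unfolding maximal_clique_def
  proof (intro conjI allI impI)
    show "clique V E K0" by (rule K0cl)
    fix K' assume h: "clique V E K' \<and> K0 \<subseteq> K'"
    have x: "x0 \<in> K0" unfolding K0_def by simp
    have "x0 \<in> K'" using h x by (elim conjE) (rule subsetD)
    then have "K' \<subseteq> K0" using Ksub h by (elim conjE) simp
    then show "K' = K0" using h by (elim conjE) (rule subset_antisym)
  qed
  have uniq: "\<exists>!K. maximal_clique V E K \<and> e \<subseteq> K"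
  proof (rule ex1I[of _ K0])
    show "maximal_clique V E K0 \<and> e \<subseteq> K0" using mK0 eK0 by simp
    fix K assume h: "maximal_clique V E K \<and> e \<subseteq> K"
    then have c: "clique V E K" and mx: "\<And>K'. clique V E K' \<and> K \<subseteq> K' \<Longrightarrow> K' = K"
      and ek: "e \<subseteq> K" unfolding maximal_clique_def by auto
    have "x0 \<in> K" using ek unfolding e_def by simp
    then have "K \<subseteq> K0" using Ksub c by simp
    then show "K = K0" using mx[of K0] K0cl by simp
  qed
  have eE: "e \<in> E" using x0y0 unfolding adj_def e_def .
  have simp_e: "simplicial_edge V E e" unfolding simplicial_edge_def
    using eE uniq peo_chordal[OF peo'] by blast
  have clawlem: "\<And>c p q z. adj (E - {e}) c p \<Longrightarrow> adj (E - {e}) c q \<Longrightarrow> {p, q} = e \<Longrightarrow> adj (E - {e}) c z \<Longrightarrow>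
      z \<noteq> p \<Longrightarrow> z \<noteq> q \<Longrightarrow> adj (E - {e}) p z \<or> adj (E - {e}) q z"
  proof -
    fix c p q z assume h: "adj (E - {e}) c p" "adj (E - {e}) c q" "{p, q} = e" "adj (E - {e}) c z" "z \<noteq> p" "z \<noteq> q"
    have cx: "adj E x0 c" using h adjE' adj_sym unfolding e_def by (metis doubleton_eq_iff)
    have zy: "z \<noteq> y0" "z \<noteq> x0" using h unfolding e_def by (auto simp: doubleton_eq_iff)
    have "adj E z y0" using keyv[OF cx _ zy(1)] h(4) adjE' by blast
    then have "adj (E - {e}) z y0" using adjE' zy unfolding e_def by (auto simp: doubleton_eq_iff)
    then show "adj (E - {e}) p z \<or> adj (E - {e}) q z" using h(3) adj_sym unfolding e_def by (metis doubleton_eq_iff)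
  qed
  have cf: "claw_free V E \<longrightarrow> claw_free V (E - {e})"
  proof
    assume cfE: "claw_free V E"
    show "claw_free V (E - {e})" unfolding claw_free_def
    proof
      assume "\<exists>c x y z. c \<in> V \<and> x \<in> V \<and> y \<in> V \<and> z \<in> V \<and>
      distinct [c, x, y, z] \<and> adj (E - {e}) c x \<and> adj (E - {e}) c y \<and> adj (E - {e}) c z \<and>
      \<not> adj (E - {e}) x y \<and> \<not> adj (E - {e}) x z \<and> \<not> adj (E - {e}) y z"
      then obtain c x y z where h: "c \<in> V" "x \<in> V" "y \<in> V" "z \<in> V"
        "distinct [c, x, y, z]" "adj (E - {e}) c x" "adj (E - {e}) c y" "adj (E - {e}) c z"
        "\<not> adj (E - {e}) x y" "\<not> adj (E - {e}) x z" "\<not> adj (E - {e}) y z" by blast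
      have cE: "adj E c x" "adj E c y" "adj E c z" using h adjE' by auto
      have "adj E x y \<or> adj E x z \<or> adj E y z" using cfE h cE unfolding claw_free_def by blast
      then have "{x, y} = e \<or> {x, z} = e \<or> {y, z} = e" using h(9-11) adjE' by blast
      then show False
      proof (elim disjE)
        assume "{x, y} = e" then show False using clawlem[OF h(6) h(7) _ h(8)] h by (auto simp: adj_sym)
      next
        assume "{x, z} = e" then show False using clawlem[OF h(6) h(8) _ h(7)] h by (auto simp: adj_sym)
      next
        assume "{y, z} = e" then show False using clawlem[OF h(7) h(8) _ h(6)] h by (auto simp: adj_sym)
      qed
    qed
  qed
  show ?thesis using simp_e seo' cf unfolding strongly_chordal_def by blast
qed

end
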